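(* Let $0<d<\pi/2$, $\mathscr{D}_d=\{\zeta\in\mathbb{C}:|\Im\zeta|<d\}$, $\psi(t)=\operatorname{arcsinh}(e^t)$. Assume $f$ is analytic on $\psi(\mathscr{D}_d)$ and there are constants $K,\alpha,\beta>0$ with $|f(z)|\le K\left|\left(\frac{z}{1+z}\right)^{\alpha-1}e^{-\beta z}\right|$ for all $z\in\psi(\mathscr{D}_d)$. Then $F(\zeta)=f(\psi(\zeta))\psi'(\zeta)$ belongs to $\mathbf{L}^{\mathrm{SE}}_{L,R,\alpha,\beta}(\mathscr{D}_d)$ with $L=2^{\beta/2}c_{\alpha,d}K$ and $R=2^{(1-\alpha+|1-\alpha|)/2}K$, where $c_{\alpha,d}=\{2(1+1/\cos d)\}^{(1-\alpha)/2}$ if $0<\alpha<1$ and $c_{\alpha,d}=2^{(\alpha-1)/2}$ if $\alpha\ge1$.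
   Context: For positive $L,R,\alpha,\beta$ and $0<d<\pi/2$, $\mathbf{L}^{\mathrm{SE}}_{L,R,\alpha,\beta}(\mathscr{D}_d)$ is the set of functions $F$ analytic on $\mathscr{D}_d$ such that for all $\zeta\in\mathscr{D}_d$, $|F(\zeta)|\le L\,|1+e^{-2\zeta}|^{-\alpha/2}|1+e^{2\zeta}|^{-\beta/2}$, and for all $x\in\mathbb{R}$, $|F(x)|\le R\,(1+e^{-2x})^{-\alpha/2}(1+e^{2x})^{-\beta/2}$. Here $\psi'(\zeta)=e^{\zeta}/\sqrt{1+e^{2\zeta}}$; complex functions use principal branches. *)

theory Defs
  imports "HOL-Analysis.Analysis"
begin

definition strip :: "real \<Rightarrow> complex set" where
  "strip d = {\<zeta>. \<bar>Im \<zeta>\<bar> < d}"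

definition carsinh :: "complex \<Rightarrow> complex" where
  "carsinh w = Ln (w + csqrt (1 + w\<^sup>2))"

definition psi :: "complex \<Rightarrow> complex" where
  "psi t = carsinh (exp t)"

definition psi' :: "complex \<Rightarrow> complex" where
  "psi' \<zeta> = exp \<zeta> / csqrt (1 + exp (2 * \<zeta>))"

definition LSE :: "real \<Rightarrow> real \<Rightarrow> real \<Rightarrow> real \<Rightarrow> real \<Rightarrow> (complex \<Rightarrow> complex) set" where
  "LSE L R \<alpha> \<beta> d = {F. F analytic_on strip d \<and>
     (\<forall>\<zeta>\<in>strip d. cmod (F \<zeta>) \<le>
        L * cmod (1 + exp (-2 * \<zeta>)) powr (-\<alpha>/2) * cmod (1 + exp (2 * \<zeta>)) powr (-\<beta>/2)) \<and>
     (\<forall>x::real. cmod (F (complex_of_real x)) \<le>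
        R * (1 + exp (-2 * x)) powr (-\<alpha>/2) * (1 + exp (2 * x)) powr (-\<beta>/2))}"

definition c_const :: "real \<Rightarrow> real \<Rightarrow> real" where
  "c_const \<alpha> d = (if \<alpha> < 1 then (2 * (1 + 1 / cos d)) powr ((1 - \<alpha>)/2)
                   else 2 powr ((\<alpha> - 1)/2))"

end

theory Submission
  imports Defs
begin

lemma tanh_le:
  fixes a :: real assumes "0 \<le> a"
  shows "exp a - inverse (exp a) \<le> a * (exp a + inverse (exp a))"
proof -
  let ?h = "\<lambda>x::real. (1+x)*exp(-x) - (1-x)*exp x"
  have "?h 0 \<le> ?h a"
  proof (rule DERIV_nonneg_imp_nondecreasing[OF assms])
    fix x :: real assume x: "0 \<le> x" "x \<le> a"
    have "DERIV ?h x :> x * (exp x - exp (-x))"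
      by (auto intro!: derivative_eq_intros simp: algebra_simps)
    moreover have "x * (exp x - exp (-x)) \<ge> 0" using x by simp
    ultimately show "\<exists>y. DERIV ?h x :> y \<and> y \<ge> 0" by blast
  qed
  then show ?thesis by (simp add: exp_minus algebra_simps)
qed

lemma tan_ge:
  fixes b :: real assumes "0 \<le> b" "b \<le> pi"
  shows "b * cos b \<le> sin b"
proof -
  let ?h = "\<lambda>x::real. sin x - x * cos x"
  have "?h 0 \<le> ?h b"
  proof (rule DERIV_nonneg_imp_nondecreasing[OF assms(1)])
    fix x :: real assume x: "0 \<le> x" "x \<le> b"
    have "DERIV ?h x :> x * sin x"
      by (auto intro!: derivative_eq_intros simp: algebra_simps)
    moreover have "x * sin x \<ge> 0" using x assms by (simp add: sin_ge_zero)
    ultimately show "\<exists>y. DERIV ?h x :> y \<and> y \<ge> 0" by blast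
  qed
  then show ?thesis by simp
qed

lemma tan_ge2:
  fixes b :: real assumes "\<bar>b\<bar> \<le> pi/2"
  shows "(b * cos b)^2 \<le> (sin b)^2"
proof -
  have c: "cos b \<ge> 0" using assms by (intro cos_ge_zero) auto
  have "\<bar>b * cos b\<bar> \<le> \<bar>sin b\<bar>"
  proof (cases "b \<ge> 0")
    case True
    then show ?thesis using tan_ge[of b] assms c by (simp add: abs_mult)
  next
    case False
    have "(-b) * cos (-b) \<le> sin (-b)" using tan_ge[of "-b"] False assms by simp
    then show ?thesis using False c by (simp add: abs_mult)
  qed
  then show ?thesis by (simp add: abs_le_square_iff)
qed
lemma upper_ineq:
  fixes a b S c \<sigma> :: real
  assumes "0 \<le> a" "a \<le> S" "(b*c)^2 \<le> \<sigma>^2" "c^2+\<sigma>^2 = 1"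
  shows "(a^2+b^2)*(S^2+c^2) \<le> 2*((1+a)^2+b^2)*(S^2+\<sigma>^2)"
proof -
  have c1: "c^2 \<le> 1" using assms(4) zero_le_power2[of \<sigma>] by linarith
  have aS: "a^2 \<le> S^2" using assms(1,2) by (simp add: power_mono)
  have "a^2*c^2 \<le> a^2" using c1 by (simp add: mult_left_le)
  then have 1: "a^2*c^2 \<le> S^2" using aS by linarith
  have 2: "a^2*S^2 + S^2 \<le> 2*(1+a)^2*S^2"
  proof -
    have "a^2 + 1 \<le> 2*(1+a)^2" using assms(1) by (simp add: power2_eq_square algebra_simps)
    then have "(a^2+1)*S^2 \<le> 2*(1+a)^2*S^2" by (intro mult_right_mono) auto
    then show ?thesis by (simp add: algebra_simps)
  qed
  have 3: "b^2*c^2 \<le> 2*(1+a)^2*\<sigma>^2"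
  proof -
    have "1 \<le> 2*(1+a)^2" using assms(1) by (simp add: power2_eq_square algebra_simps)
    then have "\<sigma>^2 \<le> 2*(1+a)^2*\<sigma>^2" by (simp add: mult_le_cancel_right1)
    then show ?thesis using assms(3) by (simp add: power_mult_distrib)
  qed
  have 4: "0 \<le> b^2*S^2" "0 \<le> b^2*\<sigma>^2" by auto
  have e1: "(a^2+b^2)*(S^2+c^2) = a^2*S^2 + a^2*c^2 + b^2*S^2 + b^2*c^2" by (simp add: algebra_simps)
  have e2: "2*((1+a)^2+b^2)*(S^2+\<sigma>^2) = 2*(1+a)^2*S^2 + 2*(1+a)^2*\<sigma>^2 + 2*b^2*S^2 + 2*b^2*\<sigma>^2"
    by (simp add: algebra_simps)
  show ?thesis unfolding e1 e2 using 1 2 3 4 by linarith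
qed

lemma lower_ineq:
  fixes a b S K c \<sigma> t :: real
  assumes t: "1 \<le> t" and a: "0 < a" "a \<le> S" "S \<le> a*K" and K: "0 < K" "K^2 = 1+S^2"
    and cs: "c^2+\<sigma>^2 = 1" "\<sigma>^2 \<le> b^2"
    and con: "K^2*\<sigma>^2 \<le> (t^2-1)*S^2*c^2"
  shows "((1+a)^2+b^2)*(S^2+\<sigma>^2) \<le> 2*(1+t)*(a^2+b^2)*(S^2+c^2)"
proof -
  have S0: "0 < S" using a by linarith
  have s1: "\<sigma>^2 \<le> 1" using cs zero_le_power2[of c] by linarith
  have K1: "1 \<le> K^2" using K by simp
  have P1: "2*(S^2+\<sigma>^2) \<le> (1+t)*(S^2+c^2)"
  proof -
    define X where "X = (t-1)*S^2"
    define Y where "Y = (t+1)*c^2"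
    have X0: "X \<ge> 0" "Y \<ge> 0" using t by (auto simp: X_def Y_def)
    have XY: "X*Y = (t^2-1)*S^2*c^2" unfolding X_def Y_def by (simp add: power2_eq_square algebra_simps)
    have "\<sigma>^2*\<sigma>^2 \<le> K^2*\<sigma>^2" using K1 s1 by (intro mult_right_mono) auto
    then have xy: "\<sigma>^2*\<sigma>^2 \<le> X*Y" using con XY by linarith
    have sq: "4*(X*Y) \<le> (X+Y)*(X+Y)" using sum_squares_ge_zero[of "X-Y" 0]
      by (simp add: power2_eq_square algebra_simps)
    have "(2*\<sigma>^2)*(2*\<sigma>^2) \<le> (X+Y)*(X+Y)" using xy sq by linarith
    then have "(2*\<sigma>^2)^2 \<le> (X+Y)^2" by (simp only: power2_eq_square[of "2*\<sigma>^2"] power2_eq_square[of "X+Y"])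
    moreover have "0 \<le> X+Y" using X0 by simp
    ultimately have "2*\<sigma>^2 \<le> X+Y" by (rule power2_le_imp_le)
    moreover have "(1+t)*(S^2+c^2) = 2*S^2 + (X+Y)" unfolding X_def Y_def by (simp add: algebra_simps)
    moreover have "2*(S^2+\<sigma>^2) = 2*S^2 + 2*\<sigma>^2" by simp
    ultimately show ?thesis by linarith
  qed
  have cK: "K^2 \<le> c^2*(1+t^2*S^2)"
  proof -
    have "\<sigma>^2 = 1 - c^2" using cs by simp
    then have "K^2 - K^2*c^2 \<le> (t^2-1)*S^2*c^2" using con by (simp add: right_diff_distrib)
    then have "K^2 \<le> c^2*(K^2 + (t^2-1)*S^2)" by (simp add: algebra_simps)
    also have "K^2 + (t^2-1)*S^2 = 1 + t^2*S^2" using K(2) by (simp add: algebra_simps)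
    finally show ?thesis .
  qed
  have aK: "S^2 \<le> a^2*K^2"
  proof -
    have "S^2 \<le> (a*K)^2" using a S0 by (intro power_mono) auto
    then show ?thesis by (simp add: power_mult_distrib)
  qed
  have P2a: "2*S^2 \<le> (1+t)*a^2*(S^2+c^2)"
  proof -
    define D where "D = (1+S^2)*(1+t^2*S^2)"
    have D0: "D > 0" by (simp add: D_def add_pos_nonneg)
    have aK': "S^2 \<le> a^2*(1+S^2)" using aK K(2) by simp
    have cK': "1+S^2 \<le> c^2*(1+t^2*S^2)" using cK K(2) by simp
    have "2*S^2*D \<le> (1+t)*S^2*(S^2*(1+t^2*S^2) + (1+S^2))"
    proof -
      have "(1+t)*S^2*(S^2*(1+t^2*S^2) + (1+S^2)) - 2*S^2*D = S^2*(t-1)*(1-t*S^2)^2"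
        unfolding D_def by (simp add: power2_eq_square algebra_simps)
      moreover have "S^2*(t-1)*(1-t*S^2)^2 \<ge> 0" using t by simp
      ultimately show ?thesis by linarith
    qed
    also have "\<dots> \<le> (1+t)*(a^2*(1+S^2))*(S^2*(1+t^2*S^2) + (1+S^2))"
    proof -
      have "0 \<le> S^2*(1+t^2*S^2) + (1+S^2)" by (simp add: add_nonneg_nonneg)
      moreover have "(1+t)*S^2 \<le> (1+t)*(a^2*(1+S^2))" using aK' t by simp
      ultimately show ?thesis by (rule mult_right_mono[rotated])
    qed
    also have "\<dots> \<le> (1+t)*(a^2*(1+S^2))*(S^2*(1+t^2*S^2) + c^2*(1+t^2*S^2))"
    proof -
      have "0 \<le> (1+t)*(a^2*(1+S^2))" using t by simp
      then show ?thesis using cK' by (intro mult_left_mono) auto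
    qed
    also have "\<dots> = ((1+t)*a^2*(S^2+c^2))*D" unfolding D_def by (simp add: algebra_simps)
    finally show ?thesis using D0 by simp
  qed
  have P2: "2*(S^2+\<sigma>^2) \<le> (1+t)*(a^2+b^2)*(S^2+c^2)"
  proof -
    have bs: "a^2*\<sigma>^2 \<le> b^2*S^2"
    proof -
      have "a^2*\<sigma>^2 \<le> S^2*\<sigma>^2" using a by (intro mult_right_mono power_mono) auto
      also have "\<dots> \<le> S^2*b^2" using cs by (intro mult_left_mono) auto
      finally show ?thesis by (simp add: mult.commute)
    qed
    have "2*(S^2+\<sigma>^2)*S^2 = (2*S^2)*(S^2+\<sigma>^2)" by simp
    also have "\<dots> \<le> ((1+t)*a^2*(S^2+c^2))*(S^2+\<sigma>^2)"
      using P2a by (intro mult_right_mono) auto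
    also have "\<dots> = (1+t)*(S^2+c^2)*(a^2*S^2 + a^2*\<sigma>^2)" by (simp add: algebra_simps)
    also have "\<dots> \<le> (1+t)*(S^2+c^2)*(a^2*S^2 + b^2*S^2)"
      using bs t by (intro mult_left_mono) auto
    also have "\<dots> = ((1+t)*(a^2+b^2)*(S^2+c^2))*S^2" by (simp add: algebra_simps)
    finally show ?thesis using S0 by simp
  qed
  show ?thesis
  proof (cases "a^2+b^2 \<ge> 1")
    case True
    have "a \<le> a^2+b^2"
    proof (cases "a \<le> 1")
      case True then show ?thesis using \<open>a^2+b^2 \<ge> 1\<close> by linarith
    next
      case False then have "a \<le> a^2" by (simp add: power2_eq_square)
      then show ?thesis using zero_le_power2[of b] by linarith
    qed
    then have h: "(1+a)^2+b^2 \<le> 4*(a^2+b^2)" using True by (simp add: power2_eq_square algebra_simps)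
    have "((1+a)^2+b^2)*(S^2+\<sigma>^2) \<le> (4*(a^2+b^2))*(S^2+\<sigma>^2)"
      using h by (intro mult_right_mono) auto
    also have "\<dots> = 2*(a^2+b^2)*(2*(S^2+\<sigma>^2))" by (simp add: algebra_simps)
    also have "\<dots> \<le> 2*(a^2+b^2)*((1+t)*(S^2+c^2))" using P1 by (intro mult_left_mono) auto
    finally show ?thesis by (simp add: algebra_simps)
  next
    case False
    then have "a^2 < 1" using zero_le_power2[of b] by linarith
    then have "\<bar>a\<bar> < 1" using abs_square_less_1 by blast
    then have "a < 1" by simp
    then have h: "(1+a)^2+b^2 \<le> 4" using False by (simp add: power2_eq_square algebra_simps)
    have "((1+a)^2+b^2)*(S^2+\<sigma>^2) \<le> 4*(S^2+\<sigma>^2)"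
      using h by (intro mult_right_mono) auto
    also have "\<dots> \<le> 2*((1+t)*(a^2+b^2)*(S^2+c^2))" using P2 by linarith
    finally show ?thesis by (simp add: algebra_simps)
  qed
qed
lemma geom_basic:
  assumes y: "\<bar>Im \<zeta>\<bar> < pi/2"
  shows "0 < Re (exp \<zeta>)" "0 \<le> Re (csqrt (1 + (exp \<zeta>)^2))"
    "exp \<zeta> + csqrt (1 + (exp \<zeta>)^2) \<notin> \<real>\<^sub>\<le>\<^sub>0"
    "1 + (exp \<zeta>)^2 \<notin> \<real>\<^sub>\<le>\<^sub>0"
    "csqrt (1 + (exp \<zeta>)^2) \<noteq> 0"
proof -
  define w where "w = exp \<zeta>"
  have cy: "cos (Im \<zeta>) > 0" using y by (intro cos_gt_zero_pi) auto
  show rw: "0 < Re (exp \<zeta>)" using cy by (simp add: Re_exp)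
  show rs: "0 \<le> Re (csqrt (1 + (exp \<zeta>)^2))" by (rule Re_csqrt)
  show "exp \<zeta> + csqrt (1 + (exp \<zeta>)^2) \<notin> \<real>\<^sub>\<le>\<^sub>0"
    using rw rs by (auto simp: complex_nonpos_Reals_iff simp del: csqrt.simps)
  show nn: "1 + (exp \<zeta>)^2 \<notin> \<real>\<^sub>\<le>\<^sub>0"
  proof
    assume "1 + (exp \<zeta>)^2 \<in> \<real>\<^sub>\<le>\<^sub>0"
    then have h: "Re (1 + w^2) \<le> 0" "Im (1 + w^2) = 0" by (auto simp: complex_nonpos_Reals_iff w_def)
    have "Im (w^2) = 2 * Re w * Im w" by (simp add: power2_eq_square)
    then have "Im w = 0" using h rw by (simp add: w_def)
    then have "Re (w^2) \<ge> 0" by (simp add: power2_eq_square)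
    then show False using h by simp
  qed
  show "csqrt (1 + (exp \<zeta>)^2) \<noteq> 0"
  proof
    assume "csqrt (1 + (exp \<zeta>)^2) = 0"
    then have "1 + (exp \<zeta>)^2 = 0" by (metis power2_csqrt zero_power2)
    then show False using nn by simp
  qed
qed

lemma geom:
  assumes d: "0 < d" "d < pi/2" and y: "\<bar>Im \<zeta>\<bar> < d"
    and w_def: "w = exp \<zeta>" and s_def: "s = csqrt (1 + w^2)" and z_def: "z = Ln (w + s)"
    and S_def: "S = (exp (Re z) - inverse (exp (Re z)))/2" and K_def: "K = (exp (Re z) + inverse (exp (Re z)))/2"
  shows "0 < Re z" "Re z \<le> S" "S \<le> Re z * K" "0 < K" "K^2 = 1 + S^2" "\<bar>Im z\<bar> \<le> pi/2"
    "K^2 * (sin (Im z))^2 \<le> ((1/cos d)^2 - 1) * S^2 * (cos (Im z))^2"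
    "(cmod w)^2 = S^2 + (sin (Im z))^2" "(cmod s)^2 = S^2 + (cos (Im z))^2" "cmod s \<le> exp (Re z)"
    "Im w = K * sin (Im z)" "\<bar>Im z\<bar> < pi/2"
proof -
  define a b where "a = Re z" and "b = Im z"
  define E where "E = exp a"
  have E0: "E > 0" by (simp add: E_def)
  have yp: "\<bar>Im \<zeta>\<bar> < pi/2" using d y by linarith
  note gb = geom_basic[OF yp, folded w_def, folded s_def]
  have s2: "s^2 = 1 + w^2" by (simp add: s_def)
  define u where "u = w + s"
  have us: "u * (s - w) = 1" using s2 by (simp add: u_def power2_eq_square algebra_simps)
  then have u0: "u \<noteq> 0" by auto
  have Reu: "0 < Re u" using gb by (simp add: u_def)
  have ez: "exp z = u" using u0 by (simp add: z_def u_def)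
  have bpi: "\<bar>b\<bar> < pi/2" unfolding b_def z_def using Re_Ln_pos_lt_imp[OF Reu] by (simp add: u_def)
  then show "\<bar>Im z\<bar> \<le> pi/2" "\<bar>Im z\<bar> < pi/2" by (simp_all add: b_def)
  have cb: "cos b > 0" using bpi by (intro cos_gt_zero_pi) auto
  have Reu': "Re u = E * cos b" "Im u = E * sin b" using ez by (auto simp: Re_exp Im_exp E_def a_def b_def)
  have inv: "s - w = inverse u" using us u0 by (simp add: field_simps)
  have invu: "inverse u = exp (-z)" using ez by (simp add: exp_minus)
  have Rei: "Re (inverse u) = inverse E * cos b" "Im (inverse u) = - (inverse E * sin b)"
  proof -
    have "Re (exp (-z)) = exp (- Re z) * cos (Im z)" "Im (exp (-z)) = exp (- Re z) * (- sin (Im z))"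
      by (simp_all only: Re_exp Im_exp uminus_complex.sel cos_minus sin_minus)
    moreover have "exp (- Re z) = inverse E" by (simp add: E_def a_def exp_minus)
    ultimately show "Re (inverse u) = inverse E * cos b" "Im (inverse u) = - (inverse E * sin b)"
      unfolding invu by (simp_all add: b_def)
  qed
  have wu: "w = (u - inverse u)/2" "s = (u + inverse u)/2" using inv by (auto simp: u_def field_simps)
  have Rew: "Re w = S * cos b" "Im w = K * sin b" "Re s = K * cos b" "Im s = S * sin b"
    using Reu' Rei unfolding wu by (auto simp: S_def K_def E_def a_def algebra_simps diff_divide_distrib add_divide_distrib)
  show "Im w = K * sin (Im z)" using Rew by (simp add: b_def)
  have Sp: "0 < S" using gb(1) cb Rew(1) by (simp add: zero_less_mult_iff)
  have "inverse E < E" using Sp by (simp add: S_def E_def a_def)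
  have E1: "1 < E"
  proof (rule ccontr)
    assume "\<not> 1 < E"
    then have "1 \<le> inverse E" using E0 by (simp add: one_le_inverse_iff)
    then show False using \<open>inverse E < E\<close> \<open>\<not> 1 < E\<close> by linarith
  qed
  then show a0: "0 < Re z" by (simp add: E_def a_def)
  show "Re z \<le> S" using real_le_x_sinh[of "Re z"] a0 by (simp add: S_def)
  show "S \<le> Re z * K" using tanh_le[of "Re z"] a0 by (simp add: S_def K_def)
  have EE: "E * inverse E = 1" using E0 by simp
  show K0: "0 < K" unfolding K_def using E0 by (simp add: E_def a_def add_pos_pos)
  show KS: "K^2 = 1 + S^2" unfolding K_def S_def E_def[unfolded a_def, symmetric]
    using EE E0 by (simp add: power2_eq_square field_simps)
  have cs: "(cos b)^2 + (sin b)^2 = 1" by simp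
  have cs2: "S^2*(cos b)^2 + S^2*(sin b)^2 = S^2" by (simp flip: distrib_left)
  show "(cmod w)^2 = S^2 + (sin (Im z))^2"
  proof -
    have "(cmod w)^2 = (S * cos b)^2 + (K * sin b)^2" using Rew by (simp add: cmod_power2)
    also have "\<dots> = S^2 * ((cos b)^2 + (sin b)^2) + (sin b)^2" using KS cs2 by (simp add: power_mult_distrib algebra_simps)
    finally show ?thesis by (simp add: b_def)
  qed
  have ns: "(cmod s)^2 = S^2 + (cos b)^2"
  proof -
    have "(cmod s)^2 = (K * cos b)^2 + (S * sin b)^2" using Rew by (simp add: cmod_power2)
    also have "\<dots> = S^2 * ((cos b)^2 + (sin b)^2) + (cos b)^2" using KS cs2 by (simp add: power_mult_distrib algebra_simps)
    finally show ?thesis by simp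
  qed
  then show "(cmod s)^2 = S^2 + (cos (Im z))^2" by (simp add: b_def)
  show "cmod s \<le> exp (Re z)"
  proof -
    have "(cos b)^2 \<le> 1" using cs zero_le_power2[of "sin b"] by linarith
    then have "(cmod s)^2 \<le> K^2" using ns KS by simp
    moreover have "inverse E \<le> 1" using E1 by (simp add: inverse_le_1_iff)
    then have "K \<le> E" using E1 unfolding K_def E_def[unfolded a_def, symmetric] by simp
    then have "K^2 \<le> E^2" using K0 by (intro power_mono) auto
    ultimately have "(cmod s)^2 \<le> (exp (Re z))^2" unfolding E_def a_def by linarith
    then show ?thesis by (rule power2_le_imp_le) simp
  qed
  define x y where "x = Re \<zeta>" and "y = Im \<zeta>"
  have cd: "cos d > 0" using d by (intro cos_gt_zero_pi) auto
  have sy: "\<bar>sin y\<bar> * cos d \<le> cos y * sin d"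
  proof -
    have "sin (d - \<bar>y\<bar>) \<ge> 0" using y d by (intro sin_ge_zero) (auto simp: y_def)
    moreover have "sin \<bar>y\<bar> = \<bar>sin y\<bar>"
      using y d sin_ge_zero[of y] sin_ge_zero[of "-y"] by (cases "y \<ge> 0") (auto simp: y_def)
    ultimately show ?thesis by (simp add: sin_diff algebra_simps)
  qed
  have Rw2: "Re w = exp x * cos y" "Im w = exp x * sin y" by (simp_all add: w_def Re_exp Im_exp x_def y_def)
  have ineq: "\<bar>Im w\<bar> * cos d \<le> Re w * sin d"
    using sy unfolding Rw2 by (simp add: abs_mult mult.assoc mult_left_mono)
  have sd: "sin d > 0" using d by (intro sin_gt_zero) auto
  have "(\<bar>K * sin b\<bar> * cos d)^2 \<le> (S * cos b * sin d)^2"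
    using ineq Rew cd by (intro power_mono) auto
  then have "K^2 * (sin b)^2 * (cos d)^2 \<le> S^2 * (cos b)^2 * (sin d)^2"
    by (simp add: power_mult_distrib)
  then have "K^2 * (sin b)^2 \<le> S^2 * (cos b)^2 * ((sin d)^2 / (cos d)^2)"
    using cd by (simp add: field_simps)
  moreover have "(sin d)^2 / (cos d)^2 = (1/cos d)^2 - 1"
    using cd by (simp add: field_simps sin_squared_eq)
  ultimately show "K^2 * (sin (Im z))^2 \<le> ((1/cos d)^2 - 1) * S^2 * (cos (Im z))^2"
    by (simp add: b_def mult_ac)
qed
lemma real_up:
  fixes a :: real assumes "0 < a"
  shows "a * ((exp a + inverse (exp a))/2) \<le> (1+a) * ((exp a - inverse (exp a))/2)"
proof -
  define E where "E = exp a"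
  have E0: "E > 0" by (simp add: E_def)
  have "1 + 2*a \<le> exp (2*a)" by (rule exp_ge_add_one_self)
  also have "exp (2*a) = E*E" by (simp add: E_def flip: exp_add)
  finally have h: "2*a \<le> E*E - 1" by simp
  have "a * inverse E \<le> (E - inverse E)/2"
  proof -
    have "a * inverse E = (2*a) / (2*E)" by (simp add: field_simps)
    also have "\<dots> \<le> (E*E - 1)/(2*E)" using h E0 by (intro divide_right_mono) auto
    also have "\<dots> = (E - inverse E)/2" using E0 by (simp add: field_simps)
    finally show ?thesis .
  qed
  then have "a * inverse E + a * ((E - inverse E)/2) \<le> (E - inverse E)/2 + a * ((E - inverse E)/2)"
    by (rule add_right_mono)
  moreover have "a * ((E + inverse E)/2) = a * inverse E + a * ((E - inverse E)/2)" by (simp add: field_simps)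
  moreover have "(1+a) * ((E - inverse E)/2) = (E - inverse E)/2 + a * ((E - inverse E)/2)" by (simp add: distrib_right)
  ultimately have "a * ((E + inverse E)/2) \<le> (1+a) * ((E - inverse E)/2)" by simp
  then show ?thesis by (simp add: E_def)
qed

lemma real_lo:
  fixes a :: real assumes "0 < a"
  shows "(1+a) * ((exp a - inverse (exp a))/2) \<le> 2 * a * ((exp a + inverse (exp a))/2)"
proof -
  have 1: "(exp a - inverse (exp a))/2 \<le> a * ((exp a + inverse (exp a))/2)"
    using tanh_le[of a] assms by simp
  have "(exp a - inverse (exp a))/2 \<le> (exp a + inverse (exp a))/2" by simp
  then have 2: "a * ((exp a - inverse (exp a))/2) \<le> a * ((exp a + inverse (exp a))/2)"
    using assms by (intro mult_left_mono) auto
  show ?thesis using 1 2 by (simp add: algebra_simps)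
qed

lemma powr_up:
  fixes q B \<alpha> :: real assumes "0 < q" "q \<le> B" "1 \<le> \<alpha>"
  shows "q powr (\<alpha>-1) \<le> B powr (\<alpha>-1)"
  using assms by (intro powr_mono2) auto

lemma powr_lo:
  fixes q B \<alpha> :: real assumes "0 < q" "1/q \<le> B" "\<alpha> < 1"
  shows "q powr (\<alpha>-1) \<le> B powr (1-\<alpha>)"
proof -
  have "q powr (\<alpha>-1) = (1/q) powr (1-\<alpha>)"
    using assms(1) by (simp add: powr_divide powr_minus_divide[symmetric] flip: powr_minus)
  also have "\<dots> \<le> B powr (1-\<alpha>)" using assms by (intro powr_mono2) auto
  finally show ?thesis .
qed

lemma assemble:
  fixes Kc \<alpha> \<beta> P Q q c0 ea g :: real
  assumes P: "0 < P" and Q: "0 < Q" and q: "0 < q" and Kc: "0 < Kc"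
    and qc: "q powr (\<alpha>-1) \<le> c0" and ea: "ea \<le> Q powr (-\<beta>)" "0 \<le> ea" and g: "1 \<le> g"
  shows "Kc * ((q*(P/Q)) powr (\<alpha>-1)) * ea * (P/Q)
         \<le> g * c0 * Kc * ((Q^2/P^2) powr (-\<alpha>/2)) * ((Q^2) powr (-\<beta>/2))"
proof -
  define r where "r = P/Q"
  have r0: "0 < r" using P Q by (simp add: r_def)
  have e1: "(q*r) powr (\<alpha>-1) * r = q powr (\<alpha>-1) * r powr \<alpha>"
    using q r0 by (simp add: powr_mult powr_diff)
  have e2: "(Q^2/P^2) powr (-\<alpha>/2) = r powr \<alpha>"
  proof -
    have "Q^2/P^2 = r powr (-2)" using P Q by (simp add: r_def powr_minus powr_divide power2_eq_square powr_numeral)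
    then show ?thesis using r0 by (simp add: powr_powr)
  qed
  have e3: "(Q^2) powr (-\<beta>/2) = Q powr (-\<beta>)"
  proof -
    have "Q^2 = Q powr 2" using Q by (simp add: powr_numeral)
    then have "(Q^2) powr (-\<beta>/2) = Q powr (2 * (-\<beta>/2))" by (simp only: powr_powr)
    then show ?thesis by simp
  qed
  have c0: "0 \<le> c0" using qc q by (meson order.trans powr_ge_zero)
  have "Kc * ((q*r) powr (\<alpha>-1)) * ea * r = Kc * (q powr (\<alpha>-1)) * (r powr \<alpha>) * ea"
    using e1 by (simp add: mult_ac)
  also have "\<dots> \<le> Kc * c0 * (r powr \<alpha>) * (Q powr (-\<beta>))"
    using Kc qc ea c0 by (intro mult_mono mult_left_mono) auto
  also have "\<dots> \<le> g * (Kc * c0 * (r powr \<alpha>) * (Q powr (-\<beta>)))"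
  proof -
    have "0 \<le> Kc * c0 * (r powr \<alpha>) * (Q powr (-\<beta>))" using Kc c0 by simp
    from mult_right_mono[OF g this] show ?thesis by simp
  qed
  finally show ?thesis unfolding e2 e3 r_def by (simp add: mult_ac)
qed
lemma sqrt_powr_eq: "0 \<le> X \<Longrightarrow> sqrt X powr e = X powr (e/2)"
  by (simp add: powr_half_sqrt[symmetric] powr_powr)

lemma pointwise:
  fixes f :: "complex \<Rightarrow> complex" and d Kc \<alpha> \<beta> :: real and \<zeta> :: complex
  assumes d: "0 < d" "d < pi/2" and y: "\<bar>Im \<zeta>\<bar> < d" and \<alpha>: "0 < \<alpha>" and \<beta>: "0 < \<beta>" and Kc: "0 < Kc"
    and fb: "cmod (f (psi \<zeta>)) \<le> Kc * cmod ((psi \<zeta> / (1 + psi \<zeta>)) powr (complex_of_real (\<alpha> - 1)) * exp (- (complex_of_real \<beta>) * psi \<zeta>))"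
  shows "cmod (f (psi \<zeta>) * psi' \<zeta>) \<le> 2 powr (\<beta>/2) * c_const \<alpha> d * Kc * cmod (1 + exp (-2 * \<zeta>)) powr (-\<alpha>/2) * cmod (1 + exp (2 * \<zeta>)) powr (-\<beta>/2)"
    and "Im \<zeta> = 0 \<Longrightarrow> cmod (f (psi \<zeta>) * psi' \<zeta>) \<le> 2 powr ((1 - \<alpha> + \<bar>1 - \<alpha>\<bar>)/2) * Kc * cmod (1 + exp (-2 * \<zeta>)) powr (-\<alpha>/2) * cmod (1 + exp (2 * \<zeta>)) powr (-\<beta>/2)"
proof -
  define w where "w = exp \<zeta>"
  define s where "s = csqrt (1 + w^2)"
  define z where "z = Ln (w + s)"
  define S where "S = (exp (Re z) - inverse (exp (Re z)))/2"
  define K where "K = (exp (Re z) + inverse (exp (Re z)))/2"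
  define a b where "a = Re z" and "b = Im z"
  note G = geom[OF d y w_def s_def z_def S_def K_def]
  have yp: "\<bar>Im \<zeta>\<bar> < pi/2" using d y by linarith
  note gb = geom_basic[OF yp, folded w_def, folded s_def]
  have psiz: "psi \<zeta> = z" by (simp add: psi_def carsinh_def z_def s_def w_def)
  have w2: "exp (2*\<zeta>) = w^2" by (simp add: w_def exp_double)
  have psi'z: "psi' \<zeta> = w / s" by (simp add: psi'_def w2 s_def w_def)
  have w0: "w \<noteq> 0" by (simp add: w_def)
  have s0: "s \<noteq> 0" using gb by (simp add: s_def)
  define P Q where "P = cmod w" and "Q = cmod s"
  have P0: "0 < P" and Q0: "0 < Q" using w0 s0 by (simp_all add: P_def Q_def)
  have a0: "0 < a" using G by (simp add: a_def)
  have z0: "z \<noteq> 0" using a0 by (auto simp: a_def)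
  have z1: "1 + z \<noteq> 0" using a0 by (auto simp: a_def complex_eq_iff)
  define m where "m = cmod z / cmod (1 + z)"
  have m0: "0 < m" using z0 z1 by (simp add: m_def)
  define q where "q = m * Q / P"
  have q0: "0 < q" using m0 P0 Q0 by (simp add: q_def)
  have mq: "m = q * (P/Q)" using P0 Q0 by (simp add: q_def)
  have nf: "cmod ((z / (1 + z)) powr (complex_of_real (\<alpha> - 1))) = m powr (\<alpha> - 1)"
    by (simp add: norm_powr_real_powr' m_def norm_divide)
  have ne: "cmod (exp (- (complex_of_real \<beta>) * z)) = exp (- \<beta> * a)" by (simp add: a_def)
  have lhs: "cmod (f (psi \<zeta>) * psi' \<zeta>) \<le> Kc * ((q*(P/Q)) powr (\<alpha>-1)) * exp (- \<beta> * a) * (P/Q)"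
  proof -
    have "cmod (f (psi \<zeta>) * psi' \<zeta>) = cmod (f z) * (P/Q)"
      by (simp add: psiz psi'z norm_mult norm_divide P_def Q_def)
    also have "\<dots> \<le> Kc * (m powr (\<alpha>-1) * exp (- \<beta> * a)) * (P/Q)"
    proof -
      have "cmod (f z) \<le> Kc * (m powr (\<alpha>-1) * exp (- \<beta> * a))"
        using fb unfolding psiz norm_mult nf ne .
      then show ?thesis using P0 Q0 by (intro mult_right_mono) auto
    qed
    finally show ?thesis by (simp add: mq mult_ac)
  qed
  have s2: "s^2 = 1 + w^2" by (simp add: s_def)
  have r1: "cmod (1 + exp (2 * \<zeta>)) = Q^2" by (simp add: w2 s2[symmetric] Q_def norm_power)
  have r2: "cmod (1 + exp (-2 * \<zeta>)) = Q^2/P^2"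
  proof -
    have "exp (-2 * \<zeta>) = inverse (w^2)" by (simp add: w2[symmetric] exp_minus[symmetric])
    then have "1 + exp (-2 * \<zeta>) = s^2 / w^2" using w0 by (simp add: s2 field_simps)
    then show ?thesis by (simp add: norm_divide norm_power P_def Q_def)
  qed
  have ea: "exp (- \<beta> * a) \<le> Q powr (-\<beta>)"
  proof -
    have "Q powr \<beta> \<le> exp a powr \<beta>" using G Q0 \<beta> by (intro powr_mono2) (auto simp: Q_def a_def)
    also have "exp a powr \<beta> = exp (\<beta> * a)" by (simp add: powr_def mult_ac)
    finally have "inverse (exp (\<beta> * a)) \<le> inverse (Q powr \<beta>)" using Q0 by (intro le_imp_inverse_le) auto
    then show ?thesis by (simp add: powr_minus exp_minus)
  qed
  define N1 N2 where "N1 = (a^2+b^2)*(S^2+(cos b)^2)" and "N2 = ((1+a)^2+b^2)*(S^2+(sin b)^2)"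
  have nz: "(cmod z)^2 = a^2+b^2" "(cmod (1+z))^2 = (1+a)^2+b^2" by (simp_all add: cmod_power2 a_def b_def)
  have PQ: "P^2 = S^2+(sin b)^2" "Q^2 = S^2+(cos b)^2" using G by (simp_all add: P_def Q_def b_def)
  have N10: "N1 > 0" and N20: "N2 > 0" using z0 z1 P0 Q0 nz PQ unfolding N1_def N2_def
    by (metis mult_pos_pos zero_less_norm_iff zero_less_power)+
  have q2: "q^2 = N1/N2"
    unfolding q_def m_def N1_def N2_def using nz PQ by (simp add: power_divide power_mult_distrib)
  have iq2: "(1/q)^2 = N2/N1" using q2 by (simp add: power_divide)
  have cb: "q powr (\<alpha>-1) \<le> c_const \<alpha> d"
  proof (cases "\<alpha> < 1")
    case False
    have "N1 \<le> 2*((1+a)^2+b^2)*(S^2+(sin b)^2)" unfolding N1_def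
    proof (rule upper_ineq)
      show "0 \<le> a" "a \<le> S" using a0 G(2) by (simp_all add: a_def)
      show "(b * cos b)^2 \<le> (sin b)^2" using G(6) tan_ge2[of b] by (simp add: b_def)
    qed simp
    then have "N1 \<le> 2 * N2" by (simp only: N2_def mult.assoc)
    then have "q^2 \<le> 2" using q2 N20 by (simp add: divide_le_eq)
    then have "q \<le> sqrt 2" by (rule real_le_rsqrt)
    then have "q powr (\<alpha>-1) \<le> sqrt 2 powr (\<alpha>-1)" using q0 False by (intro powr_up) auto
    then show ?thesis using False by (simp add: c_const_def sqrt_powr_eq)
  next
    case True
    define t where "t = 1 / cos d"
    have cd: "0 < cos d" "cos d \<le> 1" using d by (auto intro: cos_gt_zero_pi)
    have t1: "1 \<le> t" using cd by (simp add: t_def)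
    have "((1+a)^2+b^2)*(S^2+(sin b)^2) \<le> 2*(1+t)*(a^2+b^2)*(S^2+(cos b)^2)"
    proof (rule lower_ineq[OF t1])
      show "0 < a" "a \<le> S" "S \<le> a*K" "0 < K" "K^2 = 1 + S^2" using a0 G(2-5) by (simp_all add: a_def)
      show "(sin b)^2 \<le> b^2" using abs_sin_x_le_abs_x[of b] by (simp add: abs_le_square_iff)
      show "K^2 * (sin b)^2 \<le> (t^2-1) * S^2 * (cos b)^2" using G(7) by (simp add: t_def b_def)
    qed simp
    then have "N2 \<le> 2*(1+t)*N1" by (simp only: N1_def N2_def mult.assoc)
    then have "(1/q)^2 \<le> 2*(1+t)" using iq2 N10 by (simp add: divide_le_eq mult_ac)
    then have "1/q \<le> sqrt (2*(1+t))" by (rule real_le_rsqrt)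
    then have "q powr (\<alpha>-1) \<le> sqrt (2*(1+t)) powr (1-\<alpha>)" using q0 True by (intro powr_lo) auto
    then show ?thesis using True t1 by (simp add: c_const_def sqrt_powr_eq t_def)
  qed
  have g: "1 \<le> 2 powr (\<beta>/2)" using \<beta> by (intro ge_one_powr_ge_zero) auto
  show "cmod (f (psi \<zeta>) * psi' \<zeta>) \<le> 2 powr (\<beta>/2) * c_const \<alpha> d * Kc * cmod (1 + exp (-2 * \<zeta>)) powr (-\<alpha>/2) * cmod (1 + exp (2 * \<zeta>)) powr (-\<beta>/2)"
    using order.trans[OF lhs assemble[OF P0 Q0 q0 Kc cb ea _ g]] unfolding r1 r2 by simp
  assume im0: "Im \<zeta> = 0"
  have "Im w = 0" using im0 by (simp add: w_def Im_exp)
  then have sb0: "sin b = 0" using G(11) G(4) by (simp add: b_def)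
  have "- pi < b" "b < pi" using G(12) by (auto simp: b_def)
  then have b0: "b = 0" using sb0 by (rule sin_eq_0_pi)
  have KS: "K^2 = 1 + S^2" using G(5) .
  have aK0: "0 \<le> a*K" using a0 G(4) by simp
  have rb: "q powr (\<alpha>-1) \<le> 2 powr ((1 - \<alpha> + \<bar>1 - \<alpha>\<bar>)/2)"
  proof (cases "\<alpha> < 1")
    case False
    have "a*K \<le> (1+a)*S" using real_up[OF a0] by (simp add: S_def K_def a_def)
    then have "(a*K)^2 \<le> ((1+a)*S)^2" using aK0 by (rule power_mono)
    then have "N1 \<le> N2" unfolding N1_def N2_def using b0 KS by (simp add: power_mult_distrib ac_simps)
    then have "q^2 \<le> 1" using q2 N20 by (simp add: divide_le_eq)
    then have "q \<le> 1" using q0 by (simp add: power_le_one_iff)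
    then have "q powr (\<alpha>-1) \<le> 1 powr (\<alpha>-1)" using q0 False by (intro powr_up) auto
    then show ?thesis using False by simp
  next
    case True
    have "(1+a)*S \<le> 2*a*K" using real_lo[OF a0] by (simp add: S_def K_def a_def)
    moreover have "0 \<le> (1+a)*S" using a0 G(2) by (simp add: a_def)
    ultimately have "((1+a)*S)^2 \<le> (2*a*K)^2" by (rule power_mono)
    then have "N2 \<le> 4*N1" unfolding N1_def N2_def using b0 KS by (simp add: power_mult_distrib ac_simps)
    then have "(1/q)^2 \<le> 4" using iq2 N10 by (simp add: divide_le_eq mult_ac)
    then have "1/q \<le> 2" using power2_le_imp_le[of "1/q" 2] by simp
    then have "q powr (\<alpha>-1) \<le> 2 powr (1-\<alpha>)" using q0 True by (intro powr_lo) auto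
    moreover have eq: "(1 - \<alpha> + \<bar>1 - \<alpha>\<bar>)/2 = 1 - \<alpha>" using True by simp
    ultimately show ?thesis by (simp only: eq)
  qed
  show "cmod (f (psi \<zeta>) * psi' \<zeta>) \<le> 2 powr ((1 - \<alpha> + \<bar>1 - \<alpha>\<bar>)/2) * Kc * cmod (1 + exp (-2 * \<zeta>)) powr (-\<alpha>/2) * cmod (1 + exp (2 * \<zeta>)) powr (-\<beta>/2)"
    using order.trans[OF lhs assemble[OF P0 Q0 q0 Kc rb ea _ order.refl]] unfolding r1 r2 by simp
qed
theorem lemma3:
  fixes f :: "complex \<Rightarrow> complex" and d K \<alpha> \<beta> :: real
  assumes "0 < d" "d < pi / 2"
    and "f analytic_on (psi ` strip d)"
    and "0 < K" "0 < \<alpha>" "0 < \<beta>"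
    and "\<forall>z \<in> psi ` strip d.
           cmod (f z) \<le> K * cmod ((z / (1 + z)) powr (complex_of_real (\<alpha> - 1)) * exp (- (complex_of_real \<beta>) * z))"
  shows "(\<lambda>\<zeta>. f (psi \<zeta>) * psi' \<zeta>) \<in>
           LSE (2 powr (\<beta>/2) * c_const \<alpha> d * K)
               (2 powr ((1 - \<alpha> + \<bar>1 - \<alpha>\<bar>)/2) * K) \<alpha> \<beta> d"
proof -
  note d = assms(1,2)
  have op: "open (strip d)" unfolding strip_def by (intro open_Collect_less continuous_intros)
  have yp: "\<bar>Im \<zeta>\<bar> < pi/2" if "\<zeta> \<in> strip d" for \<zeta> using that d by (simp add: strip_def)
  have psi_an: "psi analytic_on strip d"
  proof -
    have "(\<lambda>\<zeta>. Ln (exp \<zeta> + csqrt (1 + (exp \<zeta>)^2))) holomorphic_on strip d"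
      using geom_basic[OF yp] by (intro holomorphic_intros) auto
    moreover have "psi = (\<lambda>\<zeta>. Ln (exp \<zeta> + csqrt (1 + (exp \<zeta>)^2)))"
      by (rule ext) (simp add: psi_def carsinh_def)
    ultimately show ?thesis using op by (simp add: analytic_on_open)
  qed
  have psi'_an: "psi' analytic_on strip d"
  proof -
    have "(\<lambda>\<zeta>. exp \<zeta> / csqrt (1 + (exp \<zeta>)^2)) holomorphic_on strip d"
      using geom_basic[OF yp] by (intro holomorphic_intros) auto
    moreover have "psi' = (\<lambda>\<zeta>. exp \<zeta> / csqrt (1 + (exp \<zeta>)^2))"
      by (rule ext) (simp add: psi'_def exp_double)
    ultimately show ?thesis using op by (simp add: analytic_on_open)
  qed
  have fpsi: "(\<lambda>\<zeta>. f (psi \<zeta>)) analytic_on strip d"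
    using analytic_on_compose_gen[OF psi_an assms(3), of] by (auto simp: o_def)
  have an: "(\<lambda>\<zeta>. f (psi \<zeta>) * psi' \<zeta>) analytic_on strip d"
    using fpsi psi'_an by (rule analytic_on_mult)
  have fb: "cmod (f (psi \<zeta>)) \<le> K * cmod ((psi \<zeta> / (1 + psi \<zeta>)) powr (complex_of_real (\<alpha> - 1)) * exp (- (complex_of_real \<beta>) * psi \<zeta>))"
    if "\<zeta> \<in> strip d" for \<zeta> using assms(7) that by blast
  have cb: "\<forall>\<zeta>\<in>strip d. cmod (f (psi \<zeta>) * psi' \<zeta>) \<le>
        (2 powr (\<beta>/2) * c_const \<alpha> d * K) * cmod (1 + exp (-2 * \<zeta>)) powr (-\<alpha>/2) * cmod (1 + exp (2 * \<zeta>)) powr (-\<beta>/2)"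
  proof
    fix \<zeta> assume z: "\<zeta> \<in> strip d"
    then have "\<bar>Im \<zeta>\<bar> < d" by (simp add: strip_def)
    from pointwise(1)[where f=f and d=d and Kc=K and \<alpha>=\<alpha> and \<beta>=\<beta> and \<zeta>=\<zeta>, OF d this assms(5,6,4) fb[OF z]] show "cmod (f (psi \<zeta>) * psi' \<zeta>) \<le>
        (2 powr (\<beta>/2) * c_const \<alpha> d * K) * cmod (1 + exp (-2 * \<zeta>)) powr (-\<alpha>/2) * cmod (1 + exp (2 * \<zeta>)) powr (-\<beta>/2)" .
  qed
  have rb: "\<forall>x::real. cmod (f (psi (complex_of_real x)) * psi' (complex_of_real x)) \<le>
        (2 powr ((1 - \<alpha> + \<bar>1 - \<alpha>\<bar>)/2) * K) * (1 + exp (-2 * x)) powr (-\<alpha>/2) * (1 + exp (2 * x)) powr (-\<beta>/2)"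
  proof
    fix x :: real
    have z: "complex_of_real x \<in> strip d" using d by (simp add: strip_def)
    then have "\<bar>Im (complex_of_real x)\<bar> < d" by (simp add: strip_def)
    note pw = pointwise(2)[where f=f and d=d and Kc=K and \<alpha>=\<alpha> and \<beta>=\<beta> and \<zeta>="complex_of_real x", OF d this assms(5,6,4) fb[OF z] Im_complex_of_real]
    have e1: "cmod (1 + exp (-2 * complex_of_real x)) = 1 + exp (-2 * x)"
    proof -
      have h: "1 + exp (-2 * complex_of_real x) = complex_of_real (1 + exp (-2 * x))"
        by (simp flip: exp_of_real)
      have "\<bar>1 + exp (-2 * x)\<bar> = 1 + exp (-2 * x)" by (simp add: add_pos_pos)
      then show ?thesis by (simp only: h norm_of_real)
    qed
    have e2: "cmod (1 + exp (2 * complex_of_real x)) = 1 + exp (2 * x)"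
    proof -
      have h: "1 + exp (2 * complex_of_real x) = complex_of_real (1 + exp (2 * x))"
        by (simp flip: exp_of_real)
      have "\<bar>1 + exp (2 * x)\<bar> = 1 + exp (2 * x)" by (simp add: add_pos_pos)
      then show ?thesis by (simp only: h norm_of_real)
    qed
    show "cmod (f (psi (complex_of_real x)) * psi' (complex_of_real x)) \<le>
        (2 powr ((1 - \<alpha> + \<bar>1 - \<alpha>\<bar>)/2) * K) * (1 + exp (-2 * x)) powr (-\<alpha>/2) * (1 + exp (2 * x)) powr (-\<beta>/2)"
      using pw unfolding e1 e2 .
  qed
  show ?thesis unfolding LSE_def using an cb rb by blast
qed

end
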